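(* Suppose that (i) there is a net $\{\varphi_\alpha\}$ in $MA(G,\sigma)$ converging pointwise to $1$ with $\|M_{\varphi_\alpha}\|=1$ for all $\alpha$, and (ii) for each $\alpha$ there is a function $\kappa_\alpha:G\to[1,\infty)$ such that $G$ is $\kappa_\alpha$-decaying and $\varphi_\alpha\kappa_\alpha\in c_0(G)$. Then $(G,\sigma)$ has the metric Fejér property.
   Context: $G$ is a discrete group, $\sigma:G\times G\to\mathbb{T}$ a normalized 2-cocycle ($\sigma(g,h)\sigma(gh,k)=\sigma(h,k)\sigma(g,hk)$, $\sigma(g,e)=\sigma(e,g)=1$); $\Lambda_\sigma(g)$ is the unitary on $\ell^2(G)$ with $(\Lambda_\sigma(g)\xi)(h)=\sigma(g,g^{-1}h)\xi(g^{-1}h)$, $\lambda=\Lambda_1$; $C^*_r(G,\sigma)$ is the operator-norm closure of $\mathrm{span}\,\Lambda_\sigma(G)$. For $\varphi:G\to\mathbb{C}$, $M_\varphi$ is the linear map with $M_\varphi(\Lambda_\sigma(g))=\varphi(g)\Lambda_\sigma(g)$; $\varphi\in MA(G,\sigma)$ if $M_\varphi$ is bounded, then extended to $C^*_r(G,\sigma)$. $\mathcal{K}(G)$ = finitely supported functions, $\pi_\lambda(f)=\sum_g f(g)\lambda(g)$; for $\kappa:G\to[1,\infty)$, $\|\xi\|_{2,\kappa}=\|\xi\kappa\|_2$ and $G$ is $\kappa$-decaying if $f\mapsto\pi_\lambda(f)$ is bounded from $(\mathcal{K}(G),\|\cdot\|_{2,\kappa})$ to $C^*_r(G,1)$. $c_0(G)$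 is the space of functions vanishing at infinity. $(G,\sigma)$ has the metric Fejér property if there is a net $\{\varphi_\beta\}$ in $\mathcal{K}(G)$ converging pointwise to $1$ with $\|M_{\varphi_\beta}\|=1$ for all $\beta$ (such a net then satisfies $M_{\varphi_\beta}(x)\to x$ in norm for all $x\in C^*_r(G,\sigma)$). *)

theory Defs
  imports "HOL-Analysis.Analysis"
begin

text \<open>The discrete group G is a type of class group_add (not necessarily commutative),
  written additively: gh is g + h, the identity is 0, the inverse of g is - g.\<close>

definition normalized_2cocycle :: "('g::group_add \<Rightarrow> 'g \<Rightarrow> complex) \<Rightarrow> bool" where
  "normalized_2cocycle \<sigma> \<longleftrightarrow>
     (\<forall>g h. cmod (\<sigma> g h) = 1) \<and>
     (\<forall>g h k. \<sigma> g h * \<sigma> (g + h) k = \<sigma> h k * \<sigma> g (h + k)) \<and>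
     (\<forall>g. \<sigma> g 0 = 1 \<and> \<sigma> 0 g = 1)"

definition Kfun :: "('g \<Rightarrow> complex) set" where
  "Kfun = {f. finite {g. f g \<noteq> 0}}"

definition l2 :: "('g \<Rightarrow> complex) set" where
  "l2 = {\<xi>. (\<lambda>h. (cmod (\<xi> h))\<^sup>2) summable_on UNIV}"

definition l2norm :: "('g \<Rightarrow> complex) \<Rightarrow> real" where
  "l2norm \<xi> = sqrt (infsum (\<lambda>h. (cmod (\<xi> h))\<^sup>2) UNIV)"

definition opnorm :: "(('g \<Rightarrow> complex) \<Rightarrow> ('g \<Rightarrow> complex)) \<Rightarrow> real" where
  "opnorm T = Sup {l2norm (T \<xi>) | \<xi>. \<xi> \<in> l2 \<and> l2norm \<xi> \<le> 1}"

definition Lam :: "('g::group_add \<Rightarrow> 'g \<Rightarrow> complex) \<Rightarrow> 'g \<Rightarrow> ('g \<Rightarrow> complex) \<Rightarrow> ('g \<Rightarrow> complex)" where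
  "Lam \<sigma> g \<xi> = (\<lambda>h. \<sigma> g (- g + h) * \<xi> (- g + h))"

definition opsum :: "('g::group_add \<Rightarrow> 'g \<Rightarrow> complex) \<Rightarrow> ('g \<Rightarrow> complex) \<Rightarrow> ('g \<Rightarrow> complex) \<Rightarrow> ('g \<Rightarrow> complex)" where
  "opsum \<sigma> a \<xi> = (\<lambda>h. \<Sum>g\<in>{g. a g \<noteq> 0}. a g * Lam \<sigma> g \<xi> h)"

definition pi_lambda :: "('g::group_add \<Rightarrow> complex) \<Rightarrow> ('g \<Rightarrow> complex) \<Rightarrow> ('g \<Rightarrow> complex)" where
  "pi_lambda f = opsum (\<lambda>_ _. 1) f"

text \<open>M_phi maps sum a(g) Lambda(g) to sum phi(g) a(g) Lambda(g). phi is in MA(G,sigma) iff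
  this map is bounded on span Lambda_sigma(G) (hence extends to C*_r(G,sigma)); its norm is the
  norm on the dense subspace span Lambda_sigma(G).\<close>
definition MA :: "('g::group_add \<Rightarrow> 'g \<Rightarrow> complex) \<Rightarrow> ('g \<Rightarrow> complex) set" where
  "MA \<sigma> = {\<phi>. \<exists>C. \<forall>a\<in>Kfun. opnorm (opsum \<sigma> (\<lambda>g. \<phi> g * a g)) \<le> C * opnorm (opsum \<sigma> a)}"

definition mult_norm :: "('g::group_add \<Rightarrow> 'g \<Rightarrow> complex) \<Rightarrow> ('g \<Rightarrow> complex) \<Rightarrow> real" where
  "mult_norm \<sigma> \<phi> = Sup {opnorm (opsum \<sigma> (\<lambda>g. \<phi> g * a g)) | a. a \<in> Kfun \<and> opnorm (opsum \<sigma> a) \<le> 1}"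

definition kappa_decaying :: "('g::group_add \<Rightarrow> real) \<Rightarrow> bool" where
  "kappa_decaying \<kappa> \<longleftrightarrow>
     (\<exists>C. \<forall>f\<in>Kfun. opnorm (pi_lambda f) \<le> C * l2norm (\<lambda>g. f g * complex_of_real (\<kappa> g)))"

definition c0 :: "('g \<Rightarrow> complex) set" where
  "c0 = {f. (f \<longlongrightarrow> 0) cofinite}"

text \<open>Metric Fejer property: a net in K(G) converging pointwise to 1 with norm-one multipliers.
  A net is represented by a proper filter on the function space (identity net).\<close>
definition metric_fejer :: "('g::group_add \<Rightarrow> 'g \<Rightarrow> complex) \<Rightarrow> bool" where
  "metric_fejer \<sigma> \<longleftrightarrow>
     (\<exists>F :: ('g \<Rightarrow> complex) filter. F \<noteq> bot \<and>
        (\<forall>\<^sub>F \<phi> in F. \<phi> \<in> Kfun \<and> \<phi> \<in> MA \<sigma> \<and> mult_norm \<sigma> \<phi> = 1) \<and>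
        (\<forall>g. ((\<lambda>\<phi>. \<phi> g) \<longlongrightarrow> 1) F))"

end

theory Submission
  imports Defs
begin

lemma l2_char:
  fixes \<xi> :: "'g \<Rightarrow> complex"
  assumes "\<And>F. finite F \<Longrightarrow> L2_set (\<lambda>h. cmod (\<xi> h)) F \<le> M"
  shows "\<xi> \<in> l2 \<and> l2norm \<xi> \<le> M"
proof -
  have M0: "0 \<le> M" using assms[of "{}"] by simp
  have S: "\<And>F. finite F \<Longrightarrow> (\<Sum>h\<in>F. (cmod (\<xi> h))\<^sup>2) \<le> M\<^sup>2"
  proof -
    fix F :: "'g set" assume "finite F"
    then have "sqrt (\<Sum>h\<in>F. (cmod (\<xi> h))\<^sup>2) \<le> M" using assms unfolding L2_set_def by blast
    then show "(\<Sum>h\<in>F. (cmod (\<xi> h))\<^sup>2) \<le> M\<^sup>2"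
      by (meson M0 real_le_lsqrt real_sqrt_le_iff sum_nonneg zero_le_power2 order_trans real_sqrt_le_mono
           power2_le_iff_abs_le sqrt_le_D)
  qed
  have sm: "(\<lambda>h. (cmod (\<xi> h))\<^sup>2) summable_on UNIV"
    by (rule nonneg_bdd_above_summable_on) (auto simp: bdd_above_def intro!: exI[of _ "M\<^sup>2"] S)
  have "infsum (\<lambda>h. (cmod (\<xi> h))\<^sup>2) UNIV \<le> M\<^sup>2"
    by (rule infsum_le_finite_sums[OF sm]) (auto intro: S)
  then have "l2norm \<xi> \<le> M" unfolding l2norm_def
    using M0 real_sqrt_le_iff real_sqrt_abs by (metis abs_of_nonneg)
  then show ?thesis using sm by (simp add: l2_def)
qed

lemma l2_part:
  fixes \<xi> :: "'g \<Rightarrow> complex"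
  assumes "\<xi> \<in> l2" "finite F"
  shows "L2_set (\<lambda>h. cmod (\<xi> h)) F \<le> l2norm \<xi>"
proof -
  have "(\<Sum>h\<in>F. (cmod (\<xi> h))\<^sup>2) \<le> infsum (\<lambda>h. (cmod (\<xi> h))\<^sup>2) UNIV"
    by (rule finite_sum_le_infsum) (use assms in \<open>auto simp: l2_def\<close>)
  then show ?thesis unfolding L2_set_def l2norm_def by simp
qed

lemma l2norm_nonneg: "0 \<le> l2norm \<xi>"
  unfolding l2norm_def by (simp add: infsum_nonneg)

lemma l2_dom:
  fixes \<xi> \<eta> :: "'g \<Rightarrow> complex"
  assumes "\<xi> \<in> l2" "\<And>h. cmod (\<eta> h) \<le> c * cmod (\<xi> h)" "0 \<le> c"
  shows "\<eta> \<in> l2 \<and> l2norm \<eta> \<le> c * l2norm \<xi>"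
proof (rule l2_char)
  fix F :: "'g set" assume F: "finite F"
  have "L2_set (\<lambda>h. cmod (\<eta> h)) F \<le> L2_set (\<lambda>h. c * cmod (\<xi> h)) F"
    by (rule L2_set_mono) (use assms in auto)
  also have "\<dots> = c * L2_set (\<lambda>h. cmod (\<xi> h)) F"
    using assms(3) by (simp add: L2_set_right_distrib)
  also have "\<dots> \<le> c * l2norm \<xi>"
    using l2_part[OF assms(1) F] assms(3) by (simp add: mult_left_mono)
  finally show "L2_set (\<lambda>h. cmod (\<eta> h)) F \<le> c * l2norm \<xi>" .
qed

lemma l2_add:
  fixes \<xi> \<eta> :: "'g \<Rightarrow> complex"
  assumes "\<xi> \<in> l2" "\<eta> \<in> l2"
  shows "(\<lambda>h. \<xi> h + \<eta> h) \<in> l2 \<and> l2norm (\<lambda>h. \<xi> h + \<eta> h) \<le> l2norm \<xi> + l2norm \<eta>"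
proof (rule l2_char)
  fix F :: "'g set" assume F: "finite F"
  have "L2_set (\<lambda>h. cmod (\<xi> h + \<eta> h)) F \<le> L2_set (\<lambda>h. cmod (\<xi> h) + cmod (\<eta> h)) F"
    by (rule L2_set_mono) (auto simp: norm_triangle_ineq)
  also have "\<dots> \<le> L2_set (\<lambda>h. cmod (\<xi> h)) F + L2_set (\<lambda>h. cmod (\<eta> h)) F"
    by (rule L2_set_triangle_ineq)
  also have "\<dots> \<le> l2norm \<xi> + l2norm \<eta>"
    using l2_part[OF assms(1) F] l2_part[OF assms(2) F] by simp
  finally show "L2_set (\<lambda>h. cmod (\<xi> h + \<eta> h)) F \<le> l2norm \<xi> + l2norm \<eta>" .
qed

lemma l2_zero: "(\<lambda>h::'g. 0 :: complex) \<in> l2 \<and> l2norm (\<lambda>h::'g. 0 :: complex) \<le> 0"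
  by (rule l2_char) (simp add: L2_set_def)

lemma l2_zero1: "(\<lambda>h::'g. 0 :: complex) \<in> l2 \<and> l2norm (\<lambda>h::'g. 0 :: complex) \<le> 1"
  using l2_zero[where 'g='g] by (meson order_trans zero_le_one)

lemma lam_l2:
  fixes \<sigma> :: "'g::group_add \<Rightarrow> 'g \<Rightarrow> complex"
  assumes "\<And>g h. cmod (\<sigma> g h) \<le> 1" "\<xi> \<in> l2"
  shows "Lam \<sigma> g \<xi> \<in> l2 \<and> l2norm (Lam \<sigma> g \<xi>) \<le> l2norm \<xi>"
proof (rule l2_char)
  fix F :: "'g set" assume F: "finite F"
  have "L2_set (\<lambda>h. cmod (Lam \<sigma> g \<xi> h)) F \<le> L2_set (\<lambda>h. cmod (\<xi> (- g + h))) F"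
    by (rule L2_set_mono) (auto simp: Lam_def norm_mult intro!: mult_left_le_one_le assms(1))
  also have "\<dots> = L2_set (\<lambda>h. cmod (\<xi> h)) ((\<lambda>h. - g + h) ` F)"
    unfolding L2_set_def by (subst sum.reindex) (auto simp: inj_on_def)
  also have "\<dots> \<le> l2norm \<xi>" by (rule l2_part[OF assms(2)]) (use F in auto)
  finally show "L2_set (\<lambda>h. cmod (Lam \<sigma> g \<xi> h)) F \<le> l2norm \<xi>" .
qed

lemma opsum_sum_l2:
  fixes \<sigma> :: "'g::group_add \<Rightarrow> 'g \<Rightarrow> complex"
  assumes "\<And>g h. cmod (\<sigma> g h) \<le> 1" "\<xi> \<in> l2" "finite S"
  shows "(\<lambda>h. \<Sum>g\<in>S. a g * Lam \<sigma> g \<xi> h) \<in> l2 \<and>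
         l2norm (\<lambda>h. \<Sum>g\<in>S. a g * Lam \<sigma> g \<xi> h) \<le> (\<Sum>g\<in>S. cmod (a g)) * l2norm \<xi>"
  using assms(3)
proof (induction S rule: finite_induct)
  case empty
  then show ?case using l2_zero by simp
next
  case (insert x S)
  have L: "Lam \<sigma> x \<xi> \<in> l2 \<and> l2norm (Lam \<sigma> x \<xi>) \<le> l2norm \<xi>" by (rule lam_l2[of \<sigma>, OF assms(1,2)])
  have A: "(\<lambda>h. a x * Lam \<sigma> x \<xi> h) \<in> l2 \<and> l2norm (\<lambda>h. a x * Lam \<sigma> x \<xi> h) \<le> cmod (a x) * l2norm (Lam \<sigma> x \<xi>)"
    by (rule l2_dom) (use L in \<open>auto simp: norm_mult\<close>)
  note B = l2_add[OF conjunct1[OF A] conjunct1[OF insert.IH]]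
  have "cmod (a x) * l2norm (Lam \<sigma> x \<xi>) \<le> cmod (a x) * l2norm \<xi>"
    using L by (simp add: mult_left_mono)
  have E: "(\<lambda>h. \<Sum>g\<in>insert x S. a g * Lam \<sigma> g \<xi> h) = (\<lambda>h. a x * Lam \<sigma> x \<xi> h + (\<Sum>g\<in>S. a g * Lam \<sigma> g \<xi> h))"
    using insert.hyps by (simp add: sum.insert)
  have E2: "(\<Sum>g\<in>insert x S. cmod (a g)) * l2norm \<xi> = cmod (a x) * l2norm \<xi> + (\<Sum>g\<in>S. cmod (a g)) * l2norm \<xi>"
    using insert.hyps by (simp add: sum.insert distrib_right)
  show ?case unfolding E E2 using A B insert.IH \<open>cmod (a x) * l2norm (Lam \<sigma> x \<xi>) \<le> cmod (a x) * l2norm \<xi>\<close>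
    by linarith
qed

definition bnd :: "(('g \<Rightarrow> complex) \<Rightarrow> ('g \<Rightarrow> complex)) \<Rightarrow> bool" where
  "bnd T \<longleftrightarrow> (\<exists>M. \<forall>\<xi>\<in>l2. l2norm \<xi> \<le> 1 \<longrightarrow> l2norm (T \<xi>) \<le> M)"

lemma opnorm_le:
  assumes "\<And>\<xi>. \<xi> \<in> l2 \<Longrightarrow> l2norm \<xi> \<le> 1 \<Longrightarrow> l2norm (T \<xi>) \<le> M"
  shows "opnorm T \<le> M"
  unfolding opnorm_def
  by (rule cSup_least) (use assms l2_zero1 in auto)

lemma opnorm_ge:
  assumes "bnd T" "\<xi> \<in> l2" "l2norm \<xi> \<le> 1"
  shows "l2norm (T \<xi>) \<le> opnorm T"
  unfolding opnorm_def
  by (rule cSup_upper) (use assms in \<open>auto simp: bnd_def bdd_above_def\<close>)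

lemma opnorm_nonneg:
  assumes "bnd T" shows "0 \<le> opnorm T"
proof -
  have "l2norm (T (\<lambda>h. 0)) \<le> opnorm T" by (rule opnorm_ge[OF assms]) (use l2_zero1 in auto)
  then show ?thesis using l2norm_nonneg order_trans by blast
qed

lemma opsum_l2:
  fixes \<sigma> :: "'g::group_add \<Rightarrow> 'g \<Rightarrow> complex"
  assumes "\<And>g h. cmod (\<sigma> g h) \<le> 1" "\<xi> \<in> l2" "a \<in> Kfun"
  shows "opsum \<sigma> a \<xi> \<in> l2 \<and> l2norm (opsum \<sigma> a \<xi>) \<le> (\<Sum>g\<in>{g. a g \<noteq> 0}. cmod (a g)) * l2norm \<xi>"
  unfolding opsum_def by (rule opsum_sum_l2) (use assms in \<open>auto simp: Kfun_def\<close>)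

lemma opsum_bnd:
  fixes \<sigma> :: "'g::group_add \<Rightarrow> 'g \<Rightarrow> complex"
  assumes "\<And>g h. cmod (\<sigma> g h) \<le> 1" "a \<in> Kfun"
  shows "bnd (opsum \<sigma> a)"
  unfolding bnd_def
proof (intro exI ballI impI)
  fix \<xi> :: "'g \<Rightarrow> complex" assume "\<xi> \<in> l2" "l2norm \<xi> \<le> 1"
  then show "l2norm (opsum \<sigma> a \<xi>) \<le> (\<Sum>g\<in>{g. a g \<noteq> 0}. cmod (a g))"
  proof -
    have "0 \<le> (\<Sum>g\<in>{g. a g \<noteq> 0}. cmod (a g))" by (rule sum_nonneg) simp
    then have "(\<Sum>g\<in>{g. a g \<noteq> 0}. cmod (a g)) * l2norm \<xi> \<le> (\<Sum>g\<in>{g. a g \<noteq> 0}. cmod (a g))"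
      by (rule mult_left_le[OF \<open>l2norm \<xi> \<le> 1\<close>])
    then show ?thesis using opsum_l2[of \<sigma>, OF assms(1) \<open>\<xi> \<in> l2\<close> assms(2)] by linarith
  qed
qed

lemma cocycle_bound: "normalized_2cocycle \<sigma> \<Longrightarrow> cmod (\<sigma> g h) \<le> 1"
  unfolding normalized_2cocycle_def by (metis order_refl)

lemma cocycle_0: "normalized_2cocycle \<sigma> \<Longrightarrow> \<sigma> g 0 = 1"
  unfolding normalized_2cocycle_def by blast

lemma Kfun_mult: "(\<lambda>g. \<psi> g * a g) \<in> Kfun" if "a \<in> Kfun"
proof -
  have "{g. \<psi> g * a g \<noteq> 0} \<subseteq> {g. a g \<noteq> 0}" by auto
  then show ?thesis using finite_subset that unfolding Kfun_def by blast
qed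

lemma Kfun_add: "(\<lambda>g. a g + b g) \<in> Kfun" if "a \<in> Kfun" "b \<in> Kfun"
proof -
  have "{g. a g + b g \<noteq> 0} \<subseteq> {g. a g \<noteq> 0} \<union> {g. b g \<noteq> 0}" by auto
  moreover have "finite ({g. a g \<noteq> 0} \<union> {g. b g \<noteq> 0})" using that unfolding Kfun_def by blast
  ultimately show ?thesis using finite_subset unfolding Kfun_def by blast
qed

lemma Kfun_zero: "(\<lambda>g. 0) \<in> Kfun"
  unfolding Kfun_def by simp

lemma delta_l2: "(\<lambda>h::'g::group_add. if h = 0 then 1 else 0 :: complex) \<in> l2 \<and>
   l2norm (\<lambda>h::'g. if h = 0 then 1 else 0 :: complex) \<le> 1"
proof (rule l2_char)
  fix F :: "'g set" assume F: "finite F"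
  have "(\<Sum>i\<in>F. (cmod (if i = 0 then 1 else 0 :: complex))\<^sup>2) = (\<Sum>i\<in>F. if i = 0 then 1 else 0)"
    by (rule sum.cong) auto
  also have "\<dots> \<le> 1" using F by (simp add: sum.delta)
  finally show "L2_set (\<lambda>h. cmod (if h = 0 then 1 else 0 :: complex)) F \<le> 1"
    unfolding L2_set_def by simp
qed

lemma opsum_delta:
  fixes \<sigma> :: "'g::group_add \<Rightarrow> 'g \<Rightarrow> complex"
  assumes "normalized_2cocycle \<sigma>" "a \<in> Kfun"
  shows "opsum \<sigma> a (\<lambda>h. if h = 0 then 1 else 0) = a"
proof
  fix h
  have e: "(- g + h = 0) = (g = h)" for g :: 'g
  proof
    assume "- g + h = 0"
    then have "g + (- g + h) = g + 0" by simp
    then show "g = h" by (simp add: add_minus_cancel)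
  next
    assume "g = h" then show "- g + h = 0" by simp
  qed
  have "opsum \<sigma> a (\<lambda>h. if h = 0 then 1 else 0) h = (\<Sum>g\<in>{g. a g \<noteq> 0}. if g = h then a g else 0)"
    unfolding opsum_def Lam_def
    by (rule sum.cong) (use cocycle_0[OF assms(1)] in \<open>auto simp: e\<close>)
  also have "\<dots> = a h" using assms(2) by (simp add: sum.delta' Kfun_def)
  finally show "opsum \<sigma> a (\<lambda>h. if h = 0 then 1 else 0) h = a h" .
qed

lemma a_le_N:
  fixes \<sigma> :: "'g::group_add \<Rightarrow> 'g \<Rightarrow> complex"
  assumes "normalized_2cocycle \<sigma>" "a \<in> Kfun"
  shows "a \<in> l2 \<and> l2norm a \<le> opnorm (opsum \<sigma> a)"
proof -
  have b: "bnd (opsum \<sigma> a)" by (rule opsum_bnd) (use assms cocycle_bound in auto)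
  have "l2norm (opsum \<sigma> a (\<lambda>h. if h = 0 then 1 else 0)) \<le> opnorm (opsum \<sigma> a)"
    by (rule opnorm_ge[OF b]) (use delta_l2 in auto)
  moreover have "opsum \<sigma> a (\<lambda>h. if h = 0 then 1 else 0) \<in> l2"
    using opsum_l2[of \<sigma>, OF cocycle_bound[OF assms(1)] _ assms(2)] delta_l2 by blast
  ultimately show ?thesis using opsum_delta[OF assms] by simp
qed

lemma N_abs:
  fixes \<sigma> :: "'g::group_add \<Rightarrow> 'g \<Rightarrow> complex"
  assumes "normalized_2cocycle \<sigma>" "b \<in> Kfun"
  shows "opnorm (opsum \<sigma> b) \<le> opnorm (pi_lambda (\<lambda>g. complex_of_real (cmod (b g))))"
proof (rule opnorm_le)
  fix \<xi> :: "'g \<Rightarrow> complex" assume x: "\<xi> \<in> l2" "l2norm \<xi> \<le> 1"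
  define bb where "bb = (\<lambda>g. complex_of_real (cmod (b g)))"
  define xx where "xx = (\<lambda>g. complex_of_real (cmod (\<xi> g)))"
  have bbK: "bb \<in> Kfun" using assms(2) by (simp add: bb_def Kfun_def)
  have xx: "xx \<in> l2 \<and> l2norm xx \<le> 1 * l2norm \<xi>" by (rule l2_dom) (use x in \<open>auto simp: xx_def\<close>)
  have sb: "\<And>g h. cmod (\<sigma> g h) \<le> 1" using cocycle_bound[OF assms(1)] .
  have pt: "cmod (opsum \<sigma> b \<xi> h) \<le> 1 * cmod (pi_lambda bb xx h)" for h
  proof -
    have "cmod (opsum \<sigma> b \<xi> h) \<le> (\<Sum>g\<in>{g. b g \<noteq> 0}. cmod (b g * Lam \<sigma> g \<xi> h))"
      unfolding opsum_def by (rule norm_sum)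
    also have "\<dots> \<le> (\<Sum>g\<in>{g. b g \<noteq> 0}. cmod (b g) * cmod (\<xi> (- g + h)))"
      by (rule sum_mono) (auto simp: Lam_def norm_mult intro!: mult_left_mono mult_left_le_one_le sb)
    also have "\<dots> = cmod (pi_lambda bb xx h)"
    proof -
      have "pi_lambda bb xx h = complex_of_real (\<Sum>g\<in>{g. b g \<noteq> 0}. cmod (b g) * cmod (\<xi> (- g + h)))"
        unfolding pi_lambda_def opsum_def Lam_def bb_def xx_def by simp
      then have "cmod (pi_lambda bb xx h) = \<bar>\<Sum>g\<in>{g. b g \<noteq> 0}. cmod (b g) * cmod (\<xi> (- g + h))\<bar>"
        by (simp only: norm_of_real)
      then show ?thesis by (simp add: sum_nonneg)
    qed
    finally show ?thesis by simp
  qed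
  have pl: "bnd (pi_lambda bb)" unfolding pi_lambda_def by (rule opsum_bnd) (use bbK in auto)
  have pxl2: "pi_lambda bb xx \<in> l2" unfolding pi_lambda_def
    using opsum_l2[of "\<lambda>_ _. 1" xx bb] xx bbK by auto
  have "l2norm (opsum \<sigma> b \<xi>) \<le> 1 * l2norm (pi_lambda bb xx)"
    using l2_dom[OF pxl2 pt] by simp
  also have "\<dots> \<le> opnorm (pi_lambda bb)" using opnorm_ge[OF pl] xx x by simp
  finally show "l2norm (opsum \<sigma> b \<xi>) \<le> opnorm (pi_lambda (\<lambda>g. complex_of_real (cmod (b g))))"
    unfolding bb_def .
qed

lemma N_small:
  fixes \<sigma> :: "'g::group_add \<Rightarrow> 'g \<Rightarrow> complex"
  assumes "normalized_2cocycle \<sigma>"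
    and dec: "\<forall>f\<in>Kfun. opnorm (pi_lambda f) \<le> C * l2norm (\<lambda>g. f g * complex_of_real (\<kappa> g))"
    and C: "0 \<le> C" and sm: "\<And>g. cmod (\<psi> g * complex_of_real (\<kappa> g)) \<le> \<eta>" and a: "a \<in> Kfun"
  shows "opnorm (opsum \<sigma> (\<lambda>g. \<psi> g * a g)) \<le> C * \<eta> * opnorm (opsum \<sigma> a)"
proof -
  define b where "b = (\<lambda>g. \<psi> g * a g)"
  have bK: "b \<in> Kfun" unfolding b_def by (rule Kfun_mult[OF a])
  have bbK: "(\<lambda>g. complex_of_real (cmod (b g))) \<in> Kfun" using bK by (simp add: Kfun_def)
  have e0: "0 \<le> \<eta>" using sm[of undefined] norm_ge_zero order_trans by blast
  have al: "a \<in> l2 \<and> l2norm a \<le> opnorm (opsum \<sigma> a)" by (rule a_le_N[OF assms(1) a])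
  have d: "(\<lambda>g. complex_of_real (cmod (b g)) * complex_of_real (\<kappa> g)) \<in> l2 \<and>
       l2norm (\<lambda>g. complex_of_real (cmod (b g)) * complex_of_real (\<kappa> g)) \<le> \<eta> * l2norm a"
  proof (rule l2_dom)
    fix h
    have "cmod (complex_of_real (cmod (b h)) * complex_of_real (\<kappa> h)) = cmod (\<psi> h * complex_of_real (\<kappa> h)) * cmod (a h)"
      by (simp add: b_def norm_mult)
    also have "\<dots> \<le> \<eta> * cmod (a h)" by (rule mult_right_mono[OF sm]) simp
    finally show "cmod (complex_of_real (cmod (b h)) * complex_of_real (\<kappa> h)) \<le> \<eta> * cmod (a h)" .
  qed (use al e0 in auto)
  have "opnorm (opsum \<sigma> b) \<le> opnorm (pi_lambda (\<lambda>g. complex_of_real (cmod (b g))))"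
    by (rule N_abs[OF assms(1) bK])
  also have "\<dots> \<le> C * l2norm (\<lambda>g. complex_of_real (cmod (b g)) * complex_of_real (\<kappa> g))"
    using dec bbK by blast
  also have "\<dots> \<le> C * (\<eta> * opnorm (opsum \<sigma> a))"
    using d al e0 C by (meson mult_left_mono order_trans)
  finally show ?thesis by (simp add: b_def mult.assoc)
qed

lemma opsum_super:
  assumes "finite S" "{g. a g \<noteq> 0} \<subseteq> S"
  shows "opsum \<sigma> a \<xi> h = (\<Sum>g\<in>S. a g * Lam \<sigma> g \<xi> h)"
  unfolding opsum_def by (rule sum.mono_neutral_left) (use assms in auto)

lemma opsum_add:
  assumes "a \<in> Kfun" "b \<in> Kfun"
  shows "opsum \<sigma> (\<lambda>g. a g + b g) \<xi> = (\<lambda>h. opsum \<sigma> a \<xi> h + opsum \<sigma> b \<xi> h)"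
proof
  fix h
  define S where "S = {g. a g \<noteq> 0} \<union> {g. b g \<noteq> 0}"
  have fS: "finite S" using assms unfolding S_def Kfun_def by blast
  have "opsum \<sigma> (\<lambda>g. a g + b g) \<xi> h = (\<Sum>g\<in>S. (a g + b g) * Lam \<sigma> g \<xi> h)"
    by (rule opsum_super[OF fS]) (auto simp: S_def)
  also have "\<dots> = (\<Sum>g\<in>S. a g * Lam \<sigma> g \<xi> h) + (\<Sum>g\<in>S. b g * Lam \<sigma> g \<xi> h)"
    by (simp add: distrib_right sum.distrib)
  also have "\<dots> = opsum \<sigma> a \<xi> h + opsum \<sigma> b \<xi> h"
    using opsum_super[OF fS, of a] opsum_super[OF fS, of b] by (auto simp: S_def)
  finally show "opsum \<sigma> (\<lambda>g. a g + b g) \<xi> h = opsum \<sigma> a \<xi> h + opsum \<sigma> b \<xi> h" .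
qed

lemma N_add:
  fixes \<sigma> :: "'g::group_add \<Rightarrow> 'g \<Rightarrow> complex"
  assumes "normalized_2cocycle \<sigma>" "a \<in> Kfun" "b \<in> Kfun"
  shows "opnorm (opsum \<sigma> (\<lambda>g. a g + b g)) \<le> opnorm (opsum \<sigma> a) + opnorm (opsum \<sigma> b)"
proof (rule opnorm_le)
  fix \<xi> :: "'g \<Rightarrow> complex" assume x: "\<xi> \<in> l2" "l2norm \<xi> \<le> 1"
  have sb: "\<And>g h. cmod (\<sigma> g h) \<le> 1" using cocycle_bound[OF assms(1)] .
  have A: "opsum \<sigma> a \<xi> \<in> l2" using opsum_l2[of \<sigma>, OF sb x(1) assms(2)] by blast
  have B: "opsum \<sigma> b \<xi> \<in> l2" using opsum_l2[of \<sigma>, OF sb x(1) assms(3)] by blast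
  have "l2norm (opsum \<sigma> (\<lambda>g. a g + b g) \<xi>) \<le> l2norm (opsum \<sigma> a \<xi>) + l2norm (opsum \<sigma> b \<xi>)"
    unfolding opsum_add[OF assms(2,3)] using l2_add[OF A B] by blast
  also have "\<dots> \<le> opnorm (opsum \<sigma> a) + opnorm (opsum \<sigma> b)"
    using opnorm_ge[OF opsum_bnd[of \<sigma>, OF sb assms(2)] x] opnorm_ge[OF opsum_bnd[of \<sigma>, OF sb assms(3)] x]
    by linarith
  finally show "l2norm (opsum \<sigma> (\<lambda>g. a g + b g) \<xi>) \<le> opnorm (opsum \<sigma> a) + opnorm (opsum \<sigma> b)" .
qed

lemma l2norm_scale:
  fixes \<xi> :: "'g \<Rightarrow> complex"
  assumes "\<xi> \<in> l2"
  shows "l2norm (\<lambda>h. c * \<xi> h) = cmod c * l2norm \<xi>"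
proof -
  have "infsum (\<lambda>h. (cmod (c * \<xi> h))\<^sup>2) UNIV = infsum (\<lambda>h. (cmod c)\<^sup>2 * (cmod (\<xi> h))\<^sup>2) UNIV"
    by (simp add: norm_mult power_mult_distrib)
  also have "\<dots> = (cmod c)\<^sup>2 * infsum (\<lambda>h. (cmod (\<xi> h))\<^sup>2) UNIV"
    by (rule infsum_cmult_right) (use assms in \<open>simp add: l2_def\<close>)
  finally show ?thesis unfolding l2norm_def by (simp add: real_sqrt_mult)
qed

lemma N_scale:
  fixes \<sigma> :: "'g::group_add \<Rightarrow> 'g \<Rightarrow> complex"
  assumes "normalized_2cocycle \<sigma>" "b \<in> Kfun" "0 < r"
  shows "opnorm (opsum \<sigma> (\<lambda>g. complex_of_real r * b g)) = r * opnorm (opsum \<sigma> b)"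
proof -
  have sb: "\<And>g h. cmod (\<sigma> g h) \<le> 1" using cocycle_bound[OF assms(1)] .
  have rb: "(\<lambda>g. complex_of_real r * b g) \<in> Kfun" by (rule Kfun_mult[OF assms(2)])
  have eq: "opsum \<sigma> (\<lambda>g. complex_of_real r * b g) \<xi> = (\<lambda>h. complex_of_real r * opsum \<sigma> b \<xi> h)" for \<xi>
    using assms(3) unfolding opsum_def by (simp add: sum_distrib_left mult.assoc)
  have nrm: "\<xi> \<in> l2 \<Longrightarrow> l2norm (opsum \<sigma> (\<lambda>g. complex_of_real r * b g) \<xi>) = r * l2norm (opsum \<sigma> b \<xi>)" for \<xi>
    unfolding eq using assms(3) opsum_l2[of \<sigma>, OF sb _ assms(2)] by (simp add: l2norm_scale)
  have b1: "bnd (opsum \<sigma> b)" by (rule opsum_bnd[of \<sigma>, OF sb assms(2)])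
  have b2: "bnd (opsum \<sigma> (\<lambda>g. complex_of_real r * b g))" by (rule opsum_bnd[of \<sigma>, OF sb rb])
  have le: "opnorm (opsum \<sigma> (\<lambda>g. complex_of_real r * b g)) \<le> r * opnorm (opsum \<sigma> b)"
  proof (rule opnorm_le)
    fix \<xi> :: "'g \<Rightarrow> complex" assume x: "\<xi> \<in> l2" "l2norm \<xi> \<le> 1"
    show "l2norm (opsum \<sigma> (\<lambda>g. complex_of_real r * b g) \<xi>) \<le> r * opnorm (opsum \<sigma> b)"
      unfolding nrm[OF x(1)] using opnorm_ge[OF b1 x] assms(3) by simp
  qed
  have ge: "opnorm (opsum \<sigma> b) \<le> opnorm (opsum \<sigma> (\<lambda>g. complex_of_real r * b g)) / r"
  proof (rule opnorm_le)
    fix \<xi> :: "'g \<Rightarrow> complex" assume x: "\<xi> \<in> l2" "l2norm \<xi> \<le> 1"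
    show "l2norm (opsum \<sigma> b \<xi>) \<le> opnorm (opsum \<sigma> (\<lambda>g. complex_of_real r * b g)) / r"
      using opnorm_ge[OF b2 x] nrm[OF x(1)] assms(3) by (simp add: field_simps)
  qed
  show ?thesis using le ge assms(3) by (simp add: field_simps)
qed

lemma N_nonneg:
  fixes \<sigma> :: "'g::group_add \<Rightarrow> 'g \<Rightarrow> complex"
  assumes "normalized_2cocycle \<sigma>" "a \<in> Kfun"
  shows "0 \<le> opnorm (opsum \<sigma> a)"
  by (rule opnorm_nonneg[OF opsum_bnd[of \<sigma>, OF cocycle_bound[OF assms(1)] assms(2)]])

lemma key:
  fixes \<sigma> :: "'g::group_add \<Rightarrow> 'g \<Rightarrow> complex"
  assumes coc: "normalized_2cocycle \<sigma>"
    and MA: "\<phi> \<in> MA \<sigma>" and mn: "mult_norm \<sigma> \<phi> = 1"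
    and dec: "\<forall>f\<in>Kfun. opnorm (pi_lambda f) \<le> C * l2norm (\<lambda>g. f g * complex_of_real (\<kappa> g))"
    and C: "0 \<le> C"
    and c0: "(\<lambda>g. \<phi> g * complex_of_real (\<kappa> g)) \<in> c0"
    and S: "finite S" and e: "0 < \<epsilon>" "\<epsilon> \<le> 1"
    and close: "\<forall>g\<in>S. cmod (\<phi> g - 1) < \<epsilon> / 8"
  shows "\<exists>\<psi>. \<psi> \<in> Kfun \<and> \<psi> \<in> MA \<sigma> \<and> mult_norm \<sigma> \<psi> = 1 \<and> (\<forall>g\<in>S. cmod (\<psi> g - 1) < \<epsilon>)"
proof -
  let ?N = "\<lambda>a. opnorm (opsum \<sigma> a)"
  define \<theta> where "\<theta> = \<epsilon> / 8"
  define \<eta> where "\<eta> = \<theta> / (C + 1)"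
  have th: "0 < \<theta>" "\<theta> \<le> 1/8" using e by (auto simp: \<theta>_def)
  have eta: "0 < \<eta>" using th C by (simp add: \<eta>_def)
  have Ceta: "C * \<eta> \<le> \<theta>"
  proof -
    have "C * \<eta> = \<theta> * (C / (C + 1))" using C by (simp add: \<eta>_def field_simps)
    also have "\<dots> \<le> \<theta> * 1" using C th by (intro mult_left_mono) auto
    finally show ?thesis by simp
  qed
  define T where "T = {g. \<eta> \<le> cmod (\<phi> g * complex_of_real (\<kappa> g))}"
  have fT: "finite T"
  proof -
    have "((\<lambda>g. \<phi> g * complex_of_real (\<kappa> g)) \<longlongrightarrow> 0) cofinite" using c0 by (simp add: c0_def)
    then have "eventually (\<lambda>g. dist (\<phi> g * complex_of_real (\<kappa> g)) 0 < \<eta>) cofinite"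
      using eta by (simp add: tendsto_iff)
    then show ?thesis by (simp add: eventually_cofinite T_def not_less)
  qed
  define U where "U = T \<union> S"
  have fU: "finite U" using fT S by (simp add: U_def)
  define \<psi>0 where "\<psi>0 = (\<lambda>g. if g \<in> U then \<phi> g else 0)"
  define \<psi>1 where "\<psi>1 = (\<lambda>g. if g \<in> U then 0 else \<phi> g)"
  define \<psi>2 where "\<psi>2 = (\<lambda>g. - \<psi>1 g)"
  have K0: "\<psi>0 \<in> Kfun"
  proof -
    have "{g. \<psi>0 g \<noteq> 0} \<subseteq> U" by (auto simp: \<psi>0_def split: if_splits)
    then show ?thesis using fU finite_subset unfolding Kfun_def by blast
  qed
  have sm1: "cmod (\<psi>1 g * complex_of_real (\<kappa> g)) \<le> \<eta>" for g
    using eta by (auto simp: \<psi>1_def U_def T_def)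
  have sm2: "cmod (\<psi>2 g * complex_of_real (\<kappa> g)) \<le> \<eta>" for g
    using sm1[of g] by (simp add: \<psi>2_def)
  obtain D where D: "\<And>a. a \<in> Kfun \<Longrightarrow> ?N (\<lambda>g. \<phi> g * a g) \<le> D * ?N a"
    using MA unfolding MA_def by blast
  have Nn: "a \<in> Kfun \<Longrightarrow> 0 \<le> ?N a" for a by (rule N_nonneg[OF coc])
  have dec1: "(\<lambda>g. \<phi> g * a g) = (\<lambda>g. \<psi>0 g * a g + \<psi>1 g * a g)" for a
    by (auto simp: \<psi>0_def \<psi>1_def)
  have dec2: "(\<lambda>g. \<psi>0 g * a g) = (\<lambda>g. \<phi> g * a g + \<psi>2 g * a g)" for a
    by (auto simp: \<psi>0_def \<psi>1_def \<psi>2_def)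
  have s1: "a \<in> Kfun \<Longrightarrow> ?N (\<lambda>g. \<psi>1 g * a g) \<le> C * \<eta> * ?N a" for a
    by (rule N_small[OF coc dec C sm1])
  have s2: "a \<in> Kfun \<Longrightarrow> ?N (\<lambda>g. \<psi>2 g * a g) \<le> C * \<eta> * ?N a" for a
    by (rule N_small[OF coc dec C sm2])
  have i1: "?N (\<lambda>g. \<psi>0 g * a g) \<le> ?N (\<lambda>g. \<phi> g * a g) + C * \<eta> * ?N a" if a: "a \<in> Kfun" for a
    using N_add[OF coc Kfun_mult[where \<psi>=\<phi> and a=a, OF a] Kfun_mult[where \<psi>=\<psi>2 and a=a, OF a]] s2[OF a]
    unfolding dec2[symmetric] by linarith
  have i2: "?N (\<lambda>g. \<phi> g * a g) \<le> ?N (\<lambda>g. \<psi>0 g * a g) + C * \<eta> * ?N a" if a: "a \<in> Kfun" for a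
    using N_add[OF coc Kfun_mult[where \<psi>=\<psi>0 and a=a, OF a] Kfun_mult[where \<psi>=\<psi>1 and a=a, OF a]] s1[OF a]
    unfolding dec1[symmetric] by linarith
  define X where "X = {?N (\<lambda>g. \<phi> g * a g) | a. a \<in> Kfun \<and> ?N a \<le> 1}"
  define X0 where "X0 = {?N (\<lambda>g. \<psi>0 g * a g) | a. a \<in> Kfun \<and> ?N a \<le> 1}"
  have SupX: "Sup X = 1" using mn by (simp add: mult_norm_def X_def)
  have N0: "?N (\<lambda>g. 0) \<le> 1"
  proof -
    have "?N (\<lambda>g. 0) \<le> 0" by (rule opnorm_le) (use l2_zero[where 'g='g] in \<open>simp add: opsum_def\<close>)
    then show ?thesis by simp
  qed
  have Xne: "X \<noteq> {}" using Kfun_zero N0 unfolding X_def by blast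
  have X0ne: "X0 \<noteq> {}" using Kfun_zero N0 unfolding X0_def by blast
  have Xbd: "x \<le> \<bar>D\<bar>" if xX: "x \<in> X" for x
  proof -
    obtain a where a: "a \<in> Kfun" "?N a \<le> 1" "x = ?N (\<lambda>g. \<phi> g * a g)" using xX X_def by blast
    have "x \<le> D * ?N a" using D a by simp
    also have "\<dots> \<le> \<bar>D\<bar> * ?N a" using Nn[OF a(1)] by (simp add: mult_right_mono)
    also have "\<dots> \<le> \<bar>D\<bar>" using Nn[OF a(1)] a(2) by (simp add: mult_left_le)
    finally show ?thesis .
  qed
  have Xle: "?N (\<lambda>g. \<phi> g * a g) \<le> 1" if "a \<in> Kfun" "?N a \<le> 1" for a
  proof -
    have "?N (\<lambda>g. \<phi> g * a g) \<in> X" using that X_def by blast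
    then show ?thesis using Xbd SupX by (metis bdd_above_def cSup_upper)
  qed
  have X0bd: "x \<le> 1 + \<theta>" if xX: "x \<in> X0" for x
  proof -
    obtain a where a: "a \<in> Kfun" "?N a \<le> 1" "x = ?N (\<lambda>g. \<psi>0 g * a g)" using xX X0_def by blast
    have "C * \<eta> * ?N a \<le> \<theta>" using Ceta Nn[OF a(1)] a(2) C eta
      by (metis mult_left_le mult_nonneg_nonneg less_imp_le order_trans)
    then show ?thesis using i1[OF a(1)] Xle[OF a(1,2)] a(3) by linarith
  qed
  define m where "m = mult_norm \<sigma> \<psi>0"
  have m_def': "m = Sup X0" by (simp add: m_def mult_norm_def X0_def)
  have mle: "m \<le> 1 + \<theta>" unfolding m_def' by (rule cSup_least[OF X0ne X0bd])
  have "1 - \<theta> < Sup X" using SupX th by simp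
  then obtain x where "x \<in> X" "1 - \<theta> < x" using less_cSupE[OF _ Xne] by blast
  then obtain a0 where a0: "a0 \<in> Kfun" "?N a0 \<le> 1" "1 - \<theta> < ?N (\<lambda>g. \<phi> g * a0 g)"
    unfolding X_def by blast
  have "C * \<eta> * ?N a0 \<le> \<theta>" using Ceta Nn[OF a0(1)] a0(2) C eta
    by (metis mult_left_le mult_nonneg_nonneg less_imp_le order_trans)
  then have "1 - 2 * \<theta> < ?N (\<lambda>g. \<psi>0 g * a0 g)" using i2[OF a0(1)] a0(3) by linarith
  moreover have "?N (\<lambda>g. \<psi>0 g * a0 g) \<le> m" unfolding m_def'
    by (rule cSup_upper) (use a0 X0bd in \<open>auto simp: X0_def bdd_above_def\<close>)
  ultimately have mge: "1 - 2 * \<theta> < m" by linarith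
  have m2: "1/2 \<le> m" using mge th by linarith
  have mpos: "0 < m" using m2 by linarith
  define \<psi> where "\<psi> = (\<lambda>g. complex_of_real (1 / m) * \<psi>0 g)"
  have Kpsi: "\<psi> \<in> Kfun" unfolding \<psi>_def by (rule Kfun_mult[OF K0])
  have psia: "\<psi> g * a g = complex_of_real (1 / m) * (\<psi>0 g * a g)" for a g
    by (simp add: \<psi>_def)
  have Npsi: "a \<in> Kfun \<Longrightarrow> ?N (\<lambda>g. \<psi> g * a g) = (1 / m) * ?N (\<lambda>g. \<psi>0 g * a g)" for a
    unfolding psia by (rule N_scale[OF coc Kfun_mult]) (use mpos in auto)
  have MApsi: "\<psi> \<in> MA \<sigma>"
    unfolding MA_def
  proof (intro CollectI exI ballI)
    fix a :: "'g \<Rightarrow> complex" assume a: "a \<in> Kfun"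
    have "?N (\<lambda>g. \<psi>0 g * a g) \<le> (D + C * \<eta>) * ?N a"
      using i1[OF a] D[OF a] by (simp add: distrib_right)
    then show "?N (\<lambda>g. \<psi> g * a g) \<le> ((D + C * \<eta>) / m) * ?N a"
      unfolding Npsi[OF a] using mpos by (simp add: field_simps)
  qed
  have mnpsi: "mult_norm \<sigma> \<psi> = 1"
    unfolding mult_norm_def
  proof (rule cSup_eq_non_empty)
    show "{?N (\<lambda>g. \<psi> g * a g) | a. a \<in> Kfun \<and> ?N a \<le> 1} \<noteq> {}"
      using Kfun_zero N0 by blast
  next
    fix x assume "x \<in> {?N (\<lambda>g. \<psi> g * a g) | a. a \<in> Kfun \<and> ?N a \<le> 1}"
    then obtain a where a: "a \<in> Kfun" "?N a \<le> 1" "x = ?N (\<lambda>g. \<psi> g * a g)" by blast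
    have "?N (\<lambda>g. \<psi>0 g * a g) \<le> m" unfolding m_def'
      by (rule cSup_upper) (use a X0bd in \<open>auto simp: X0_def bdd_above_def\<close>)
    then show "x \<le> 1" unfolding a(3) Npsi[OF a(1)] using mpos by (simp add: field_simps)
  next
    fix y assume H: "\<And>x. x \<in> {?N (\<lambda>g. \<psi> g * a g) | a. a \<in> Kfun \<and> ?N a \<le> 1} \<Longrightarrow> x \<le> y"
    have "x \<le> m * y" if "x \<in> X0" for x
    proof -
      obtain a where a: "a \<in> Kfun" "?N a \<le> 1" "x = ?N (\<lambda>g. \<psi>0 g * a g)" using \<open>x \<in> X0\<close> X0_def by blast
      have "?N (\<lambda>g. \<psi> g * a g) \<le> y" using H a by blast
      then show ?thesis unfolding a(3) using Npsi[OF a(1)] mpos by (simp add: field_simps)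
    qed
    then have "m \<le> m * y" unfolding m_def' by (intro cSup_least[OF X0ne]) (simp add: m_def')
    then show "1 \<le> y" using mpos by simp
  qed
  have closepsi: "cmod (\<psi> g - 1) < \<epsilon>" if g: "g \<in> S" for g
  proof -
    have "\<psi> g = \<phi> g / complex_of_real m" using g by (simp add: \<psi>_def \<psi>0_def U_def)
    then have "\<psi> g - 1 = (\<phi> g - complex_of_real m) / complex_of_real m" using mpos by (simp add: field_simps)
    then have eq: "cmod (\<psi> g - 1) = cmod (\<phi> g - complex_of_real m) / m" using mpos by (simp add: norm_divide)
    have "cmod (\<phi> g - complex_of_real m) \<le> cmod (\<phi> g - 1) + cmod (1 - complex_of_real m)"
      using norm_triangle_ineq[of "\<phi> g - 1" "1 - complex_of_real m"] by simp
    also have "cmod (1 - complex_of_real m) = \<bar>1 - m\<bar>"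
      by (metis norm_of_real of_real_1 of_real_diff)
    also have "cmod (\<phi> g - 1) + \<bar>1 - m\<bar> < 3 * \<theta>"
    proof -
      have c1: "cmod (\<phi> g - 1) < \<theta>" using close g by (simp add: \<theta>_def)
      have "\<bar>1 - m\<bar> < 2 * \<theta>" using mle mge th by (simp add: abs_if)
      then show "cmod (\<phi> g - 1) + \<bar>1 - m\<bar> < 3 * \<theta>" using c1 by linarith
    qed
    finally have "cmod (\<phi> g - complex_of_real m) < 3 * \<theta>" .
    then have "cmod (\<phi> g - complex_of_real m) / m < 3 * \<theta> / m" using mpos by (simp add: divide_strict_right_mono)
    also have "\<dots> \<le> 3 * \<theta> / (1/2)" using m2 th by (intro divide_left_mono) auto
    also have "\<dots> < \<epsilon>" using e by (simp add: \<theta>_def)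
    finally show ?thesis using eq by simp
  qed
  show ?thesis using Kpsi MApsi mnpsi closepsi by blast
qed

theorem theorem5p14:
  fixes \<sigma> :: "'g::group_add \<Rightarrow> 'g \<Rightarrow> complex"
    and F :: "'i filter"
    and \<phi> :: "'i \<Rightarrow> 'g \<Rightarrow> complex"
    and \<kappa> :: "'i \<Rightarrow> 'g \<Rightarrow> real"
  assumes "normalized_2cocycle \<sigma>"
    and "F \<noteq> bot"
    and "\<forall>\<alpha>. \<phi> \<alpha> \<in> MA \<sigma> \<and> mult_norm \<sigma> (\<phi> \<alpha>) = 1"
    and "\<forall>g. ((\<lambda>\<alpha>. \<phi> \<alpha> g) \<longlongrightarrow> 1) F"
    and "\<forall>\<alpha>. (\<forall>g. \<kappa> \<alpha> g \<ge> 1) \<and> kappa_decaying (\<kappa> \<alpha>)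
            \<and> (\<lambda>g. \<phi> \<alpha> g * complex_of_real (\<kappa> \<alpha> g)) \<in> c0"
  shows "metric_fejer \<sigma>"
proof -
  note coc = assms(1)
  define P where "P = (\<lambda>(S :: 'g set, \<epsilon> :: real).
     {\<psi>. \<psi> \<in> Kfun \<and> \<psi> \<in> MA \<sigma> \<and> mult_norm \<sigma> \<psi> = 1 \<and> (\<forall>g\<in>S. cmod (\<psi> g - 1) < \<epsilon>)})"
  define I where "I = {(S :: 'g set, \<epsilon> :: real). finite S \<and> 0 < \<epsilon>}"
  define G where "G = (INF i\<in>I. principal (P i))"
  have ne: "P i \<noteq> {}" if i: "i \<in> I" for i
  proof -
    obtain S \<epsilon> where i': "i = (S, \<epsilon>)" "finite S" "0 < \<epsilon>" using i I_def by auto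
    define \<epsilon>' where "\<epsilon>' = min \<epsilon> 1"
    have e': "0 < \<epsilon>'" "\<epsilon>' \<le> 1" "\<epsilon>' \<le> \<epsilon>" using i' by (auto simp: \<epsilon>'_def)
    have "\<forall>g\<in>S. eventually (\<lambda>\<alpha>. dist (\<phi> \<alpha> g) 1 < \<epsilon>' / 8) F"
    proof
      fix g assume "g \<in> S"
      have "0 < \<epsilon>' / 8" using e' by simp
      then show "eventually (\<lambda>\<alpha>. dist (\<phi> \<alpha> g) 1 < \<epsilon>' / 8) F"
        using assms(4)[rule_format, of g, unfolded tendsto_iff] by blast
    qed
    then have "eventually (\<lambda>\<alpha>. \<forall>g\<in>S. dist (\<phi> \<alpha> g) 1 < \<epsilon>' / 8) F"
      by (rule eventually_ball_finite[OF i'(2)])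
    then obtain \<alpha> where al: "\<forall>g\<in>S. dist (\<phi> \<alpha> g) 1 < \<epsilon>' / 8"
      using eventually_happens assms(2) by blast
    obtain C where C: "\<forall>f\<in>Kfun. opnorm (pi_lambda f) \<le> C * l2norm (\<lambda>g. f g * complex_of_real (\<kappa> \<alpha> g))"
      using assms(5) unfolding kappa_decaying_def by blast
    have C': "\<forall>f\<in>Kfun. opnorm (pi_lambda f) \<le> max C 0 * l2norm (\<lambda>g. f g * complex_of_real (\<kappa> \<alpha> g))"
    proof
      fix f :: "'g \<Rightarrow> complex" assume "f \<in> Kfun"
      then have "opnorm (pi_lambda f) \<le> C * l2norm (\<lambda>g. f g * complex_of_real (\<kappa> \<alpha> g))" using C by blast
      also have "\<dots> \<le> max C 0 * l2norm (\<lambda>g. f g * complex_of_real (\<kappa> \<alpha> g))"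
        by (rule mult_right_mono) (auto simp: l2norm_nonneg)
      finally show "opnorm (pi_lambda f) \<le> max C 0 * l2norm (\<lambda>g. f g * complex_of_real (\<kappa> \<alpha> g))" .
    qed
    have "\<exists>\<psi>. \<psi> \<in> Kfun \<and> \<psi> \<in> MA \<sigma> \<and> mult_norm \<sigma> \<psi> = 1 \<and> (\<forall>g\<in>S. cmod (\<psi> g - 1) < \<epsilon>')"
      by (rule key[OF coc _ _ C' _ _ i'(2) e'(1,2)])
         (use assms(3,5) al in \<open>auto simp: dist_norm\<close>)
    then obtain \<psi> where "\<psi> \<in> Kfun" "\<psi> \<in> MA \<sigma>" "mult_norm \<sigma> \<psi> = 1" "\<forall>g\<in>S. cmod (\<psi> g - 1) < \<epsilon>'"
      by blast
    then have "\<psi> \<in> P i" using e' by (force simp: P_def i'(1))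
    then show ?thesis by blast
  qed
  have dir: "\<exists>k\<in>I. principal (P k) \<le> inf (principal (P i)) (principal (P j))" if ij: "i \<in> I" "j \<in> I" for i j
  proof -
    obtain S1 e1 where 1: "i = (S1, e1)" "finite S1" "0 < e1" using ij(1) I_def by auto
    obtain S2 e2 where 2: "j = (S2, e2)" "finite S2" "0 < e2" using ij(2) I_def by auto
    have "(S1 \<union> S2, min e1 e2) \<in> I" using 1 2 by (simp add: I_def)
    moreover have "P (S1 \<union> S2, min e1 e2) \<subseteq> P i \<inter> P j" by (auto simp: P_def 1 2)
    ultimately show ?thesis by (intro bexI[of _ "(S1 \<union> S2, min e1 e2)"]) auto
  qed
  have Gbot: "G \<noteq> bot"
    unfolding G_def using INF_filter_bot_base[of I "\<lambda>i. principal (P i)", OF dir] ne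
    by (auto simp: principal_eq_bot_iff)
  have ev: "\<forall>\<^sub>F \<psi> in G. \<psi> \<in> Kfun \<and> \<psi> \<in> MA \<sigma> \<and> mult_norm \<sigma> \<psi> = 1"
    unfolding G_def
    by (rule eventually_INF1[of "({}, 1)"]) (auto simp: I_def P_def eventually_principal)
  have lim: "((\<lambda>\<psi>. \<psi> g) \<longlongrightarrow> 1) G" for g
  proof (unfold tendsto_iff, intro allI impI)
    fix e :: real assume e: "0 < e"
    show "\<forall>\<^sub>F \<psi> in G. dist (\<psi> g) 1 < e"
      unfolding G_def
      by (rule eventually_INF1[of "({g}, e)"]) (use e in \<open>auto simp: I_def P_def eventually_principal dist_norm\<close>)
  qed
  show ?thesis unfolding metric_fejer_def using Gbot ev lim by blast
qed

end
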